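(* Let $f_6(\tau)=\displaystyle\int_i^{\tau}\eta(z)^4\,dz$ for $\tau\in\mathfrak{H}$. Then \[ \{f_6,\tau\}=\frac{2\pi^2}{36}\,E_4(\tau). \]
   Context: $\mathfrak{H}$ is the complex upper half-plane, $q=e^{2\pi i\tau}$. $\eta(\tau)=q^{1/24}\prod_{m\geq1}(1-q^m)$ is the Dedekind eta function and $E_4(\tau)=1+240\sum_{m\geq1}\sigma_3(m)q^m$, $\sigma_3(m)=\sum_{0<d\mid m}d^3$, is the weight $4$ Eisenstein series. For a meromorphic function $f$, the Schwarz derivative is $\{f,\tau\}=\frac{f'''}{f'}-\frac32\left(\frac{f''}{f'}\right)^2$. *)

theory Defs
  imports "HOL-Complex_Analysis.Complex_Analysis"
begin

definition qnome :: "complex \<Rightarrow> complex" where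
  "qnome \<tau> = exp (2 * complex_of_real pi * \<i> * \<tau>)"

definition dedekind_eta :: "complex \<Rightarrow> complex" where
  "dedekind_eta \<tau> = exp (2 * complex_of_real pi * \<i> * \<tau> / 24) *
     (\<Prod>m. (1 - qnome \<tau> ^ Suc m))"

definition sigma3 :: "nat \<Rightarrow> nat" where
  "sigma3 n = (\<Sum>d\<in>{d. 0 < d \<and> d dvd n}. d ^ 3)"

definition eisenstein_E4 :: "complex \<Rightarrow> complex" where
  "eisenstein_E4 \<tau> = 1 + 240 * (\<Sum>m. of_nat (sigma3 (Suc m)) * qnome \<tau> ^ Suc m)"

definition schwarzian :: "(complex \<Rightarrow> complex) \<Rightarrow> complex \<Rightarrow> complex" where
  "schwarzian f \<tau> = (deriv ^^ 3) f \<tau> / deriv f \<tau>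
      - 3 / 2 * ((deriv ^^ 2) f \<tau> / deriv f \<tau>) ^ 2"

text \<open>f_6(tau) = integral from i to tau of eta^4; the upper half-plane is convex and
  eta^4 is holomorphic there, so the integral is taken along the straight segment.\<close>
definition f6 :: "complex \<Rightarrow> complex" where
  "f6 \<tau> = contour_integral (linepath \<i> \<tau>) (\<lambda>z. dedekind_eta z ^ 4)"

end

theory Submission
  imports Defs "HOL-Real_Asymp.Real_Asymp"
begin

definition Sq :: "nat \<Rightarrow> (nat\<times>nat\<times>nat\<times>nat) set" where
  "Sq n = {(a,b,x,y). 0<a \<and> 0<b \<and> 0<x \<and> 0<y \<and> a*x+b*y = n}"

lemma Sq_sub: "Sq n \<subseteq> {..n}\<times>{..n}\<times>{..n}\<times>{..n}"
proof
  fix p assume "p \<in> Sq n"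
  then obtain a b x y where p: "p = (a,b,x,y)" "0<a" "0<b" "0<x" "0<y" "a*x+b*y = n"
    by (auto simp: Sq_def)
  have "a \<le> a*x" "x \<le> a*x" "b \<le> b*y" "y \<le> b*y" using p by simp_all
  then have "a \<le> n" "b \<le> n" "x \<le> n" "y \<le> n" using p(6) by linarith+
  then show "p \<in> {..n}\<times>{..n}\<times>{..n}\<times>{..n}" using p by auto
qed

lemma finite_Sq: "finite (Sq n)"
  by (rule finite_subset[OF Sq_sub]) auto

lemma E1: "(\<Sum>(a,b,x,y)\<in>{(a,b,x,y)\<in>Sq n. b<a}. G (a-b,b,x,x+y)) =
           (\<Sum>(a,b,x,y)\<in>{(a,b,x,y)\<in>Sq n. x<y}. G (a,b,x,y))"
  by (rule sum.reindex_bij_witness[where j="\<lambda>(a,b,x,y). (a-b,b,x,x+y)" and i="\<lambda>(a,b,x,y). (a+b,b,x,y-x)"])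
     (auto simp: Sq_def algebra_simps diff_mult_distrib2 diff_mult_distrib less_imp_le mult_le_mono1 trans_le_add1)

lemma E2: "(\<Sum>(a,b,x,y)\<in>{(a,b,x,y)\<in>Sq n. a<b}. G (a,b-a,x+y,y)) =
           (\<Sum>(a,b,x,y)\<in>{(a,b,x,y)\<in>Sq n. y<x}. G (a,b,x,y))"
  by (rule sum.reindex_bij_witness[where j="\<lambda>(a,b,x,y). (a,b-a,x+y,y)" and i="\<lambda>(a,b,x,y). (a,a+b,x-y,y)"])
     (auto simp: Sq_def algebra_simps diff_mult_distrib2 diff_mult_distrib less_imp_le mult_le_mono1 mult_le_mono2 trans_le_add1)

lemma Esym: "(\<Sum>(a,b,x,y)\<in>{(a,b,x,y)\<in>Sq n. P a b x y}. G (b,a,y,x)) =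
           (\<Sum>(a,b,x,y)\<in>{(a,b,x,y)\<in>Sq n. P b a y x}. G (a,b,x,y))"
  by (rule sum.reindex_bij_witness[where j="\<lambda>(a,b,x,y). (b,a,y,x)" and i="\<lambda>(a,b,x,y). (b,a,y,x)"])
     (auto simp: Sq_def algebra_simps)

definition Dv :: "nat \<Rightarrow> nat set" where "Dv n = {d\<in>{1..n}. d dvd n}"
definition sig :: "nat \<Rightarrow> nat" where "sig n = (\<Sum>d\<in>Dv n. d)"
definition s3 :: "nat \<Rightarrow> nat" where "s3 n = (\<Sum>d\<in>Dv n. d^3)"

lemma finite_Dv[simp]: "finite (Dv n)" by (simp add: Dv_def)

lemma W_eq: "(\<Sum>i\<le>n. sig i * sig (n-i)) = (\<Sum>(a,b,x,y)\<in>Sq n. a*b)"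
proof -
  have "(\<Sum>i\<le>n. sig i * sig (n-i)) = (\<Sum>i\<le>n. \<Sum>(a,b)\<in>Dv i \<times> Dv (n-i). a*b)"
    by (simp add: sig_def sum_product sum.cartesian_product)
  also have "\<dots> = (\<Sum>(i,(a,b))\<in>Sigma {..n} (\<lambda>i. Dv i \<times> Dv (n-i)). a*b)"
    by (subst sum.Sigma) auto
  also have "\<dots> = (\<Sum>(a,b,x,y)\<in>Sq n. a*b)"
  proof (rule sum.reindex_bij_witness[where j="\<lambda>(i,(a,b)). (a,b,i div a,(n-i) div b)" and i="\<lambda>(a,b,x,y). (a*x,(a,b))"])
    fix p assume "p \<in> Sigma {..n} (\<lambda>i. Dv i \<times> Dv (n-i))"
    then obtain i a b where p: "p = (i,(a,b))" "i \<le> n" "1 \<le> a" "a \<le> i" "a dvd i" "1 \<le> b" "b \<le> n - i" "b dvd (n-i)"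
      by (auto simp: Dv_def)
    then show "(case case p of (i, a, b) \<Rightarrow> (a, b, i div a, (n - i) div b) of (a, b, x, y) \<Rightarrow> (a * x, a, b)) = p"
      by auto
    show "(case p of (i, a, b) \<Rightarrow> (a, b, i div a, (n - i) div b)) \<in> Sq n"
      using p by (auto simp: Sq_def elim!: dvdE)
    show "(case case p of (i, a, b) \<Rightarrow> (a, b, i div a, (n - i) div b) of (a, b, x, y) \<Rightarrow> a * b) = (case p of (i, a, b) \<Rightarrow> a * b)"
      using p by auto
  next
    fix p assume "p \<in> Sq n"
    then obtain a b x y where p: "p = (a,b,x,y)" "0<a" "0<b" "0<x" "0<y" "a*x+b*y = n"
      by (auto simp: Sq_def)
    have "a \<le> a*x" "b \<le> b*y" using p by simp_all
    then show "(case case p of (a, b, x, y) \<Rightarrow> (a * x, a, b) of (i, a, b) \<Rightarrow> (a, b, i div a, (n - i) div b)) = p"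
      "(case p of (a, b, x, y) \<Rightarrow> (a * x, a, b)) \<in> Sigma {..n} (\<lambda>i. Dv i \<times> Dv (n - i))"
      using p by (auto simp: Dv_def)
  qed
  finally show ?thesis .
qed

lemma split3:
  fixes A :: "('a\<times>'b\<times>'c\<times>'d) set"
  assumes "finite A"
    and ex: "\<And>a b x y. (P a b x y \<and> \<not> Q a b x y \<and> \<not> R a b x y) \<or> (\<not> P a b x y \<and> Q a b x y \<and> \<not> R a b x y) \<or> (\<not> P a b x y \<and> \<not> Q a b x y \<and> R a b x y)"
  shows "sum f A = sum f {(a,b,x,y)\<in>A. P a b x y} + sum f {(a,b,x,y)\<in>A. Q a b x y} + sum f {(a,b,x,y)\<in>A. R a b x y}"
proof -
  have "A = ({(a,b,x,y)\<in>A. P a b x y} \<union> {(a,b,x,y)\<in>A. Q a b x y}) \<union> {(a,b,x,y)\<in>A. R a b x y}" using ex by fastforce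
  then have "sum f A = sum f (({(a,b,x,y)\<in>A. P a b x y} \<union> {(a,b,x,y)\<in>A. Q a b x y}) \<union> {(a,b,x,y)\<in>A. R a b x y})" by simp
  also have "\<dots> = sum f ({(a,b,x,y)\<in>A. P a b x y} \<union> {(a,b,x,y)\<in>A. Q a b x y}) + sum f {(a,b,x,y)\<in>A. R a b x y}"
    by (rule sum.union_disjoint) (use assms in \<open>auto intro: finite_subset\<close>)
  also have "sum f ({(a,b,x,y)\<in>A. P a b x y} \<union> {(a,b,x,y)\<in>A. Q a b x y}) = sum f {(a,b,x,y)\<in>A. P a b x y} + sum f {(a,b,x,y)\<in>A. Q a b x y}"
    by (rule sum.union_disjoint) (use assms in \<open>auto intro: finite_subset\<close>)
  finally show ?thesis .
qed

lemma main3: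
  "4 * (\<Sum>(a,b,x,y)\<in>Sq n. a*b) + 2 * (\<Sum>(a,b,x,y)\<in>{(a,b,x,y)\<in>Sq n. a=b}. a^2)
    = 2 * (\<Sum>(a,b,x,y)\<in>{(a,b,x,y)\<in>Sq n. x=y}. a^2) + (\<Sum>(a,b,x,y)\<in>{(a,b,x,y)\<in>Sq n. x=y}. (a+b)^2)"
proof -
  let ?S = "Sq n"
  have fin: "finite ?S" by (rule finite_Sq)
  define W where "W = (\<Sum>(a,b,x,y)\<in>Sq n. a*b)"
  define X3 where "X3 = (\<Sum>(a,b,x,y)\<in>{(a,b,x,y)\<in>Sq n. x=y}. (a+b)^2)"
  define SS where "SS = (\<Sum>(a,b,x,y)\<in>Sq n. (a+b)^2)"
  have sp1: "SS = (\<Sum>(a,b,x,y)\<in>{(a,b,x,y)\<in>Sq n. x<y}. (a+b)^2) + (\<Sum>(a,b,x,y)\<in>{(a,b,x,y)\<in>Sq n. y<x}. (a+b)^2) + X3"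
    unfolding SS_def X3_def by (rule split3[where f="\<lambda>(a,b,x,y). (a+b)^2" and P="\<lambda>a b x y. x<y" and Q="\<lambda>a b x y. y<x" and R="\<lambda>a b x y. x=y", OF fin]) auto
  have e1: "(\<Sum>(a,b,x,y)\<in>{(a,b,x,y)\<in>Sq n. x<y}. (a+b)^2) = (\<Sum>(a,b,x,y)\<in>{(a,b,x,y)\<in>Sq n. b<a}. a^2)"
  proof -
    have "(\<Sum>(a,b,x,y)\<in>{(a,b,x,y)\<in>Sq n. b<a}. a^2) = (\<Sum>(a,b,x,y)\<in>{(a,b,x,y)\<in>Sq n. b<a}. (a-b+b)^2)"
      by (intro sum.cong) auto
    then show ?thesis using E1[where G="\<lambda>(a,b,x,y). (a+b)^2" and n=n] by simp
  qed
  have e2: "(\<Sum>(a,b,x,y)\<in>{(a,b,x,y)\<in>Sq n. y<x}. (a+b)^2) = (\<Sum>(a,b,x,y)\<in>{(a,b,x,y)\<in>Sq n. a<b}. b^2)"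
  proof -
    have "(\<Sum>(a,b,x,y)\<in>{(a,b,x,y)\<in>Sq n. a<b}. b^2) = (\<Sum>(a,b,x,y)\<in>{(a,b,x,y)\<in>Sq n. a<b}. (a+(b-a))^2)"
      by (intro sum.cong) auto
    then show ?thesis using E2[where G="\<lambda>(a,b,x,y). (a+b)^2" and n=n] by simp
  qed
  have sy1: "(\<Sum>(a,b,x,y)\<in>{(a,b,x,y)\<in>Sq n. a<b}. b^2) = (\<Sum>(a,b,x,y)\<in>{(a,b,x,y)\<in>Sq n. b<a}. a^2)"
    using Esym[where P="\<lambda>a b x y. a<b" and G="\<lambda>(a,b,x,y). a^2" and n=n] by simp
  have sp2a: "SS = (\<Sum>(a,b,x,y)\<in>{(a,b,x,y)\<in>Sq n. a<b}. (a+b)^2) + (\<Sum>(a,b,x,y)\<in>{(a,b,x,y)\<in>Sq n. b<a}. (a+b)^2) + (\<Sum>(a,b,x,y)\<in>{(a,b,x,y)\<in>Sq n. a=b}. (a+b)^2)"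
    unfolding SS_def by (rule split3[where f="\<lambda>(a,b,x,y). (a+b)^2" and P="\<lambda>a b x y. a<b" and Q="\<lambda>a b x y. b<a" and R="\<lambda>a b x y. a=b", OF fin]) auto
  have sp2b: "W = (\<Sum>(a,b,x,y)\<in>{(a,b,x,y)\<in>Sq n. a<b}. a*b) + (\<Sum>(a,b,x,y)\<in>{(a,b,x,y)\<in>Sq n. b<a}. a*b) + (\<Sum>(a,b,x,y)\<in>{(a,b,x,y)\<in>Sq n. a=b}. a*b)"
    unfolding W_def by (rule split3[where f="\<lambda>(a,b,x,y). a*b" and P="\<lambda>a b x y. a<b" and Q="\<lambda>a b x y. b<a" and R="\<lambda>a b x y. a=b", OF fin]) auto
  have sq1: "(a+b)^2 = 4*(a*b) + (b-a)^2" if "a<b" for a b :: nat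
  proof -
    obtain c where "b = a + c" using \<open>a<b\<close> less_imp_add_positive by blast
    then show ?thesis by (simp add: power2_eq_square algebra_simps)
  qed
  have sq2: "(a+b)^2 = 4*(a*b) + (a-b)^2" if "b<a" for a b :: nat
    using sq1[OF that] by (simp add: add.commute mult.commute)
  have t1: "(\<Sum>(a,b,x,y)\<in>{(a,b,x,y)\<in>Sq n. a<b}. (a+b)^2) = 4*(\<Sum>(a,b,x,y)\<in>{(a,b,x,y)\<in>Sq n. a<b}. a*b) + (\<Sum>(a,b,x,y)\<in>{(a,b,x,y)\<in>Sq n. a<b}. (b-a)^2)"
    by (simp only: sum_distrib_left sum.distrib[symmetric] case_prod_unfold) (auto intro!: sum.cong simp: sq1)
  have t2: "(\<Sum>(a,b,x,y)\<in>{(a,b,x,y)\<in>Sq n. b<a}. (a+b)^2) = 4*(\<Sum>(a,b,x,y)\<in>{(a,b,x,y)\<in>Sq n. b<a}. a*b) + (\<Sum>(a,b,x,y)\<in>{(a,b,x,y)\<in>Sq n. b<a}. (a-b)^2)"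
    by (simp only: sum_distrib_left sum.distrib[symmetric] case_prod_unfold) (auto intro!: sum.cong simp: sq2)
  have t3: "(\<Sum>(a,b,x,y)\<in>{(a,b,x,y)\<in>Sq n. a=b}. (a+b)^2) = 4*(\<Sum>(a,b,x,y)\<in>{(a,b,x,y)\<in>Sq n. a=b}. a*b)"
    by (simp only: sum_distrib_left case_prod_unfold) (auto intro!: sum.cong simp: power2_eq_square algebra_simps)
  have e3: "(\<Sum>(a,b,x,y)\<in>{(a,b,x,y)\<in>Sq n. b<a}. (a-b)^2) = (\<Sum>(a,b,x,y)\<in>{(a,b,x,y)\<in>Sq n. x<y}. a^2)"
    using E1[where G="\<lambda>(a,b,x,y). a^2" and n=n] by simp
  have e4: "(\<Sum>(a,b,x,y)\<in>{(a,b,x,y)\<in>Sq n. a<b}. (b-a)^2) = (\<Sum>(a,b,x,y)\<in>{(a,b,x,y)\<in>Sq n. y<x}. b^2)"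
    using E2[where G="\<lambda>(a,b,x,y). b^2" and n=n] by simp
  have sy2: "(\<Sum>(a,b,x,y)\<in>{(a,b,x,y)\<in>Sq n. y<x}. b^2) = (\<Sum>(a,b,x,y)\<in>{(a,b,x,y)\<in>Sq n. x<y}. a^2)"
    using Esym[where P="\<lambda>a b x y. y<x" and G="\<lambda>(a,b,x,y). a^2" and n=n] by simp
  have e5: "(\<Sum>(a,b,x,y)\<in>{(a,b,x,y)\<in>Sq n. a<b}. a^2) = (\<Sum>(a,b,x,y)\<in>{(a,b,x,y)\<in>Sq n. y<x}. a^2)"
    using E2[where G="\<lambda>(a,b,x,y). a^2" and n=n] by simp
  have sp3: "(\<Sum>(a,b,x,y)\<in>Sq n. a^2) = (\<Sum>(a,b,x,y)\<in>{(a,b,x,y)\<in>Sq n. a<b}. a^2) + (\<Sum>(a,b,x,y)\<in>{(a,b,x,y)\<in>Sq n. b<a}. a^2) + (\<Sum>(a,b,x,y)\<in>{(a,b,x,y)\<in>Sq n. a=b}. a^2)"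
    by (rule split3[where f="\<lambda>(a,b,x,y). a^2" and P="\<lambda>a b x y. a<b" and Q="\<lambda>a b x y. b<a" and R="\<lambda>a b x y. a=b", OF fin]) auto
  have sp4: "(\<Sum>(a,b,x,y)\<in>Sq n. a^2) = (\<Sum>(a,b,x,y)\<in>{(a,b,x,y)\<in>Sq n. x<y}. a^2) + (\<Sum>(a,b,x,y)\<in>{(a,b,x,y)\<in>Sq n. y<x}. a^2) + (\<Sum>(a,b,x,y)\<in>{(a,b,x,y)\<in>Sq n. x=y}. a^2)"
    by (rule split3[where f="\<lambda>(a,b,x,y). a^2" and P="\<lambda>a b x y. x<y" and Q="\<lambda>a b x y. y<x" and R="\<lambda>a b x y. x=y", OF fin]) auto
  show ?thesis
    using sp1 e1 e2 sy1 sp2a sp2b t1 t2 t3 e3 e4 sy2 e5 sp3 sp4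
    unfolding W_def[symmetric] X3_def[symmetric] by linarith
qed

lemma bdab: "(\<Sum>(a,b,x,y)\<in>{(a,b,x,y)\<in>Sq n. a=b}. a^2) = (\<Sum>d\<in>Dv n. (n div d - 1) * d^2)"
proof -
  have "(\<Sum>(a,b,x,y)\<in>{(a,b,x,y)\<in>Sq n. a=b}. a^2) = (\<Sum>(d,x)\<in>Sigma (Dv n) (\<lambda>d. {1..<n div d}). d^2)"
  proof (rule sum.reindex_bij_witness[where j="\<lambda>(a,b,x,y). (a,x)" and i="\<lambda>(d,x). (d,d,x,n div d - x)"])
    fix p assume "p \<in> {(a,b,x,y)\<in>Sq n. a=b}"
    then obtain a x y where p: "p = (a,a,x,y)" "0<a" "0<x" "0<y" "a*x+a*y = n"
      by (auto simp: Sq_def)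
    have ne: "n = a*(x+y)" using p(5) by (simp add: distrib_left)
    have "a*(x+y) div a = x+y" using p(2) by simp
    then have nd: "n div a = x + y" by (simp only: ne)
    have "a \<le> a*x" using p by simp
    then have an: "a \<le> n" using p(5) by linarith
    have ad: "a dvd n" using ne by simp
    show "(case case p of (a, b, x, y) \<Rightarrow> (a, x) of (d, x) \<Rightarrow> (d, d, x, n div d - x)) = p"
      by (simp add: p(1) nd)
    show "(case p of (a, b, x, y) \<Rightarrow> (a, x)) \<in> Sigma (Dv n) (\<lambda>d. {1..<n div d})"
      using p(2,3,4) an ad by (simp add: p(1) nd Dv_def)
    show "(case case p of (a, b, x, y) \<Rightarrow> (a, x) of (d, x) \<Rightarrow> d\<^sup>2) = (case p of (a, b, x, y) \<Rightarrow> a\<^sup>2)"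
      by (simp add: p(1))
  next
    fix q assume "q \<in> Sigma (Dv n) (\<lambda>d. {1..<n div d})"
    then obtain d x where q: "q = (d,x)" "1 \<le> d" "d \<le> n" "d dvd n" "1 \<le> x" "x < n div d"
      by (auto simp: Dv_def)
    define c where "c = n div d - x"
    have c: "n div d = x + c" using q(6) by (simp add: c_def)
    have "d * x + d * (n div d - x) = d * (n div d)"
      by (simp only: c) (simp add: distrib_left)
    also have "\<dots> = n" using q by simp
    finally have e: "d * x + d * (n div d - x) = n" .
    show "(case case q of (d, x) \<Rightarrow> (d, d, x, n div d - x) of (a, b, x, y) \<Rightarrow> (a, x)) = q"
      by (simp add: q(1))
    show "(case q of (d, x) \<Rightarrow> (d, d, x, n div d - x)) \<in> {(a, b, x, y)\<in>Sq n. a = b}"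
      using q(2,5,6) e by (simp add: q(1) Sq_def)
  qed
  also have "\<dots> = (\<Sum>d\<in>Dv n. \<Sum>x\<in>{1..<n div d}. d^2)"
    by (subst sum.Sigma) auto
  also have "\<dots> = (\<Sum>d\<in>Dv n. (n div d - 1) * d^2)" by simp
  finally show ?thesis .
qed

lemma bdxy: "(\<Sum>(a,b,x,y)\<in>{(a,b,x,y)\<in>Sq n. x=y}. F a b) = (\<Sum>d\<in>Dv n. \<Sum>a\<in>{1..<d}. F a (d-a))"
proof -
  have "(\<Sum>(a,b,x,y)\<in>{(a,b,x,y)\<in>Sq n. x=y}. F a b) = (\<Sum>(d,a)\<in>Sigma (Dv n) (\<lambda>d. {1..<d}). F a (d-a))"
  proof (rule sum.reindex_bij_witness[where j="\<lambda>(a,b,x,y). (a+b,a)" and i="\<lambda>(d,a). (a,d-a,n div d,n div d)"])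
    fix p assume "p \<in> {(a,b,x,y)\<in>Sq n. x=y}"
    then obtain a b x where p: "p = (a,b,x,x)" "0<a" "0<b" "0<x" "a*x+b*x = n"
      by (auto simp: Sq_def)
    have e: "n = (a+b)*x" using p by (simp add: distrib_right)
    have nd: "n div (a+b) = x" using p e by simp
    have "a+b \<le> (a+b)*x" using p by simp
    then show "(case case p of (a, b, x, y) \<Rightarrow> (a + b, a) of (d, a) \<Rightarrow> (a, d - a, n div d, n div d)) = p"
      "(case p of (a, b, x, y) \<Rightarrow> (a + b, a)) \<in> Sigma (Dv n) (\<lambda>d. {1..<d})"
      "(case case p of (a, b, x, y) \<Rightarrow> (a + b, a) of (d, a) \<Rightarrow> F a (d - a)) = (case p of (a, b, x, y) \<Rightarrow> F a b)"
      using p nd e by (auto simp: Dv_def)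
  next
    fix q assume "q \<in> Sigma (Dv n) (\<lambda>d. {1..<d})"
    then obtain d a where q: "q = (d,a)" "1 \<le> d" "d \<le> n" "d dvd n" "1 \<le> a" "a < d"
      by (auto simp: Dv_def)
    define c where "c = d - a"
    have c: "d = a + c" using q(6) by (simp add: c_def)
    have "a * (n div d) + (d - a) * (n div d) = d * (n div d)"
      by (simp add: c distrib_right)
    also have "\<dots> = n" using q by simp
    finally have e: "a * (n div d) + (d - a) * (n div d) = n" .
    have "0 < n div d" using q by (auto elim!: dvdE)
    then show "(case case q of (d, a) \<Rightarrow> (a, d - a, n div d, n div d) of (a, b, x, y) \<Rightarrow> (a + b, a)) = q"
      "(case q of (d, a) \<Rightarrow> (a, d - a, n div d, n div d)) \<in> {(a, b, x, y)\<in>Sq n. x = y}"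
      using q e by (auto simp: Sq_def)
  qed
  also have "\<dots> = (\<Sum>d\<in>Dv n. \<Sum>a\<in>{1..<d}. F a (d-a))"
    by (subst sum.Sigma) auto
  finally show ?thesis .
qed

lemma sumsq: "6 * (\<Sum>a\<in>{1..<d}. a^2) = (d-1)*d*(2*d-1::nat)"
proof (induction d)
  case 0 then show ?case by simp
next
  case (Suc d)
  show ?case
  proof (cases "d = 0")
    case True then show ?thesis by simp
  next
    case False
    have "{1..<Suc d} = insert d {1..<d}" using False by auto
    then have "6 * (\<Sum>a\<in>{1..<Suc d}. a^2) = 6*d^2 + 6 * (\<Sum>a\<in>{1..<d}. a^2)" by simp
    also have "\<dots> = 6*d^2 + (d-1)*d*(2*d-1)" using Suc by simp
    also have "\<dots> = d*(Suc d)*(2*(Suc d) - 1)"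
    proof -
      obtain e where "d = Suc e" using False by (cases d) auto
      then show ?thesis by (simp add: algebra_simps power2_eq_square)
    qed
    finally show ?thesis by simp
  qed
qed

theorem conv_id: "12 * (\<Sum>i\<le>n. sig i * sig (n-i)) + 6 * n * sig n = 5 * s3 n + sig n"
proof -
  define W where "W = (\<Sum>(a,b,x,y)\<in>Sq n. a*b)"
  have X: "(\<Sum>d\<in>Dv n. \<Sum>a\<in>{1..<d}. (a + (d-a))^2) = (\<Sum>d\<in>Dv n. (d-1)*d^2)"
  proof (intro sum.cong refl)
    fix d assume "d \<in> Dv n"
    have "(\<Sum>a\<in>{1..<d}. (a + (d-a))^2) = (\<Sum>a\<in>{1..<d}. d^2)" by (intro sum.cong) auto
    then show "(\<Sum>a\<in>{1..<d}. (a + (d-a))^2) = (d-1)*d^2" by simp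
  qed
  have H: "4*W + 2*(\<Sum>d\<in>Dv n. (n div d - 1) * d^2) = 2*(\<Sum>d\<in>Dv n. \<Sum>a\<in>{1..<d}. a^2) + (\<Sum>d\<in>Dv n. (d-1)*d^2)"
    using main3[of n] bdab[of n] bdxy[where n=n and F="\<lambda>a b. a^2"] bdxy[where n=n and F="\<lambda>a b. (a+b)^2"] X
    unfolding W_def by (simp add: atLeastLessThan_iff cong: sum.cong)
  have Hi: "12 * int W = (\<Sum>d\<in>Dv n. 3*(2*int (\<Sum>a\<in>{1..<d}. a^2) + int ((d-1)*d^2)) - 6 * int ((n div d - 1) * d^2))"
  proof -
    have "int (4*W + 2*(\<Sum>d\<in>Dv n. (n div d - 1) * d^2)) = int (2*(\<Sum>d\<in>Dv n. \<Sum>a\<in>{1..<d}. a^2) + (\<Sum>d\<in>Dv n. (d-1)*d^2))"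
      using H by simp
    then have "4 * int W + 2*(\<Sum>d\<in>Dv n. int ((n div d - 1) * d^2)) = 2*(\<Sum>d\<in>Dv n. int (\<Sum>a\<in>{1..<d}. a^2)) + (\<Sum>d\<in>Dv n. int ((d-1)*d^2))"
      by (simp only: of_nat_add of_nat_mult of_nat_sum)
    moreover have "(\<Sum>d\<in>Dv n. 3*(2*int (\<Sum>a\<in>{1..<d}. a^2) + int ((d-1)*d^2)) - 6 * int ((n div d - 1) * d^2))
       = 6*(\<Sum>d\<in>Dv n. int (\<Sum>a\<in>{1..<d}. a^2)) + 3*(\<Sum>d\<in>Dv n. int ((d-1)*d^2)) - 6*(\<Sum>d\<in>Dv n. int ((n div d - 1) * d^2))"
      by (simp only: sum_subtractf sum.distrib sum_distrib_left distrib_left mult.assoc) simp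
    ultimately show ?thesis by linarith
  qed
  have pd: "3*(2*int (\<Sum>a\<in>{1..<d}. a^2) + int ((d-1)*d^2)) - 6 * int ((n div d - 1) * d^2)
       = 5 * int d^3 + int d - 6 * int n * int d" if "d \<in> Dv n" for d
  proof -
    from that have d: "1 \<le> d" "d dvd n" by (auto simp: Dv_def)
    then obtain k where k: "n = d*k" by (auto elim: dvdE)
    have "k \<ge> 1" using d k that by (auto simp: Dv_def intro: ccontr)
    have ndk: "n div d = k" using d k by simp
    have s6: "6 * int (\<Sum>a\<in>{1..<d}. a^2) = int ((d-1)*d*(2*d-1))"
      using sumsq[of d] by (metis of_nat_mult of_nat_numeral)
    have "int ((d-1)*d*(2*d-1)) = (int d - 1)*int d*(2*int d - 1)" using d by (simp add: of_nat_diff)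
    moreover have "int ((d-1)*d^2) = (int d - 1)* int d^2" using d by (simp add: of_nat_diff)
    moreover have "int ((n div d - 1) * d^2) = (int k - 1) * int d^2" using \<open>k\<ge>1\<close> ndk by (simp add: of_nat_diff)
    ultimately show ?thesis using s6 k by (simp add: algebra_simps power2_eq_square power3_eq_cube)
  qed
  have "12 * int W = (\<Sum>d\<in>Dv n. 5 * int d^3 + int d - 6 * int n * int d)"
    using Hi pd by simp
  also have "\<dots> = 5 * int (s3 n) + int (sig n) - 6 * int n * int (sig n)"
    by (simp add: s3_def sig_def sum_subtractf sum.distrib sum_distrib_left)
  finally have "12 * int W + 6 * int n * int (sig n) = 5 * int (s3 n) + int (sig n)" by simp
  then have "int (12 * W + 6 * n * sig n) = int (5 * s3 n + sig n)" by simp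
  then show ?thesis using W_eq[of n] unfolding W_def by (simp only: of_nat_eq_iff)
qed

lemma conv_radius_bound:
  fixes c :: "nat \<Rightarrow> complex"
  assumes "\<And>n. norm (c n) \<le> real n ^ 4"
  shows "conv_radius c \<ge> 1"
proof (rule conv_radius_geI_ex')
  fix r :: real assume r: "0 < r" "ereal r < 1"
  have cr: "conv_radius (\<lambda>n. real n ^ 4) = 1"
  proof (rule conv_radius_ratio_limit_nonzero[of _ 1])
    show "(\<lambda>n. norm (real n ^ 4) / norm (real (Suc n) ^ 4)) \<longlonglongrightarrow> 1"
      by (simp only: norm_power real_norm_def abs_of_nat) real_asymp
  qed (simp_all add: one_ereal_def)
  have "summable (\<lambda>n. norm (real n ^ 4 * r ^ n))"
    by (rule abs_summable_in_conv_radius) (use r cr in simp)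
  then show "summable (\<lambda>n. c n * of_real r ^ n)"
  proof (rule summable_comparison_test')
    fix n :: nat
    show "norm (c n * complex_of_real r ^ n) \<le> norm (real n ^ 4 * r ^ n)"
      using assms[of n] r by (simp add: norm_mult norm_power mult_right_mono)
  qed
qed

lemma card_Dv_le: "card (Dv n) \<le> n"
proof -
  have "card (Dv n) \<le> card {1..n}" by (rule card_mono) (auto simp: Dv_def)
  then show ?thesis by simp
qed

lemma Dv_le: "d \<in> Dv n \<Longrightarrow> d \<le> n" by (simp add: Dv_def)

lemma sig_le: "sig n \<le> n^2"
proof -
  have "sig n \<le> (\<Sum>d\<in>Dv n. n)" unfolding sig_def by (rule sum_mono) (simp add: Dv_le)
  also have "\<dots> = card (Dv n) * n" by simp
  also have "\<dots> \<le> n * n" by (rule mult_right_mono[OF card_Dv_le]) simp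
  finally show ?thesis by (simp add: power2_eq_square)
qed

lemma s3_le: "s3 n \<le> n^4"
proof -
  have "s3 n \<le> (\<Sum>d\<in>Dv n. n^3)" unfolding s3_def by (rule sum_mono) (simp add: Dv_le power_mono)
  also have "\<dots> = card (Dv n) * n^3" by simp
  also have "\<dots> \<le> n * n^3" by (rule mult_right_mono[OF card_Dv_le]) simp
  finally show ?thesis by (simp add: power_Suc[symmetric] del: power_Suc)
qed

lemma sigma3_eq: "sigma3 n = s3 n"
proof (cases "n = 0")
  case True
  have "infinite {d::nat. 0 < d \<and> d dvd 0}"
  proof -
    have "{d::nat. 0 < d \<and> d dvd 0} = - {0}" by auto
    then show ?thesis by simp
  qed
  then show ?thesis using True by (simp add: sigma3_def s3_def Dv_def)
next
  case False
  then have "{d. 0 < d \<and> d dvd n} = Dv n" by (auto simp: Dv_def dvd_imp_le)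
  then show ?thesis by (simp add: sigma3_def s3_def)
qed

definition Afps :: "complex fps" where "Afps = Abs_fps (\<lambda>n. of_nat (sig n))"
definition Bfps :: "complex fps" where "Bfps = Abs_fps (\<lambda>n. of_nat (s3 n))"
definition Lfps :: "complex fps" where "Lfps = Abs_fps (\<lambda>n. of_nat (sig n) / of_nat n)"
definition Pfps :: "complex fps" where "Pfps = 1 - fps_const 24 * Afps"
definition Qfps :: "complex fps" where "Qfps = 1 + fps_const 240 * Bfps"

lemma rA: "fps_conv_radius Afps \<ge> 1"
  unfolding fps_conv_radius_def Afps_def
proof (rule conv_radius_bound)
  fix n
  have "real (sig n) \<le> real n ^ 2" using sig_le[of n] by (metis of_nat_le_iff of_nat_power)
  also have "\<dots> \<le> real n ^ 4" by (cases "n = 0") (simp_all add: power_increasing)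
  finally show "norm (fps_nth (Abs_fps (\<lambda>n. of_nat (sig n) :: complex)) n) \<le> real n ^ 4" by simp
qed

lemma rB: "fps_conv_radius Bfps \<ge> 1"
  unfolding fps_conv_radius_def Bfps_def
proof (rule conv_radius_bound)
  fix n
  have "real (s3 n) \<le> real n ^ 4" using s3_le[of n] by (metis of_nat_le_iff of_nat_power)
  then show "norm (fps_nth (Abs_fps (\<lambda>n. of_nat (s3 n) :: complex)) n) \<le> real n ^ 4" by simp
qed

lemma rL: "fps_conv_radius Lfps \<ge> 1"
  unfolding fps_conv_radius_def Lfps_def
proof (rule conv_radius_bound)
  fix n
  show "norm (fps_nth (Abs_fps (\<lambda>n. of_nat (sig n) / of_nat n :: complex)) n) \<le> real n ^ 4"
  proof (cases "n = 0")
    case True then show ?thesis by simp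
  next
    case False
    have "real (sig n) \<le> real n ^ 2" using sig_le[of n] by (metis of_nat_le_iff of_nat_power)
    then have "real (sig n) / real n \<le> real n" using False by (simp add: divide_le_eq power2_eq_square)
    also have "\<dots> \<le> real n ^ 4" using False power_increasing[of 1 4 "real n"] by simp
    finally show ?thesis by (simp add: norm_divide)
  qed
qed

lemma X_deriv_nth: "(fps_X * fps_deriv f) $ n = of_nat n * f $ n"
  by (cases n) (simp_all add: fps_X_mult_nth)

lemma sq_expand: "((1::'a::comm_ring_1) - c * a)^2 = 1 - (c + c) * a + (c * c) * a^2"
  by (simp add: power2_eq_square algebra_simps)

lemma fps_id: "fps_const 12 * (fps_X * fps_deriv Pfps) = Pfps^2 - Qfps"
proof -
  have e1: "Pfps^2 - Qfps = fps_const 576 * Afps^2 - fps_const 48 * Afps - fps_const 240 * Bfps"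
  proof -
    have "Pfps^2 = 1 - (fps_const 24 + fps_const 24) * Afps + (fps_const 24 * fps_const 24) * Afps^2"
      unfolding Pfps_def by (rule sq_expand)
    then show ?thesis unfolding Qfps_def by (simp add: fps_const_add fps_const_mult)
  qed
  show ?thesis
  proof (rule fps_ext)
    fix n
    have c: "12 * (\<Sum>i\<le>n. sig i * sig (n-i)) + 6 * n * sig n = 5 * s3 n + sig n" by (rule conv_id)
    then have c': "12 * (\<Sum>i\<le>n. of_nat (sig i) * of_nat (sig (n-i))) + 6 * of_nat n * of_nat (sig n) = 5 * of_nat (s3 n) + (of_nat (sig n) :: complex)"
    proof -
      have "of_nat (12 * (\<Sum>i\<le>n. sig i * sig (n-i)) + 6 * n * sig n) = (of_nat (5 * s3 n + sig n) :: complex)"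
        using c by (rule arg_cong)
      then show ?thesis by (simp only: of_nat_add of_nat_mult of_nat_sum of_nat_numeral)
    qed
    have sq: "(Afps^2) $ n = (\<Sum>i\<le>n. of_nat (sig i) * of_nat (sig (n-i)))"
      by (simp add: power2_eq_square fps_mult_nth Afps_def atLeast0AtMost)
    have "(fps_const 12 * (fps_X * fps_deriv Pfps)) $ n = 12 * of_nat n * ((if n = 0 then 1 else 0) - 24 * of_nat (sig n))"
      by (simp add: X_deriv_nth Pfps_def Afps_def)
    also have "\<dots> = - 288 * of_nat n * of_nat (sig n)" by (cases "n = 0") simp_all
    also have "\<dots> = 576 * (Afps^2) $ n - 48 * of_nat (sig n) - 240 * of_nat (s3 n)"
      unfolding sq using arg_cong[OF c', of "\<lambda>z. 48 * z"] by (simp add: algebra_simps)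
    also have "\<dots> = (Pfps^2 - Qfps) $ n" unfolding e1 by (simp add: Afps_def Bfps_def)
    finally show "(fps_const 12 * (fps_X * fps_deriv Pfps)) $ n = (Pfps^2 - Qfps) $ n" .
  qed
qed

definition fib :: "nat \<Rightarrow> (nat\<times>nat) set" where "fib n = {(m,k). Suc m * Suc k = n}"

lemma fib_finite: "finite (fib n)"
proof -
  have "fib n \<subseteq> {..n} \<times> {..n}"
  proof
    fix p assume "p \<in> fib n"
    then obtain m k where p: "p = (m,k)" "Suc m * Suc k = n" by (auto simp: fib_def)
    have "Suc m \<le> Suc m * Suc k" "Suc k \<le> Suc m * Suc k" by simp_all
    then show "p \<in> {..n} \<times> {..n}" using p by auto
  qed
  then show ?thesis by (rule finite_subset) auto
qed

lemma fib_sum: "(\<Sum>(m,k)\<in>fib n. 1 / of_nat (Suc k) :: complex) = of_nat (sig n) / of_nat n"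
proof (cases "n = 0")
  case True
  then have "fib n = {}" by (auto simp: fib_def)
  then show ?thesis using True by simp
next
  case False
  have "(\<Sum>(m,k)\<in>fib n. 1 / of_nat (Suc k) :: complex) = (\<Sum>(m,k)\<in>fib n. of_nat (Suc m) / of_nat n)"
  proof -
    have *: "1 / of_nat (Suc k) = (of_nat (Suc m) / of_nat n :: complex)" if "Suc m * Suc k = n" for m k
    proof -
      have "of_nat (Suc m) * of_nat (Suc k) = (of_nat n :: complex)" using that by (metis of_nat_mult)
      then show ?thesis using False by (auto simp: field_simps simp del: of_nat_Suc)
    qed
    show ?thesis by (intro sum.cong refl) (auto simp: fib_def * simp del: of_nat_Suc)
  qed
  also have "\<dots> = (\<Sum>(m,k)\<in>fib n. of_nat (Suc m)) / of_nat n"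
    by (simp add: sum_divide_distrib case_prod_unfold)
  also have "(\<Sum>(m,k)\<in>fib n. of_nat (Suc m) :: complex) = (\<Sum>d\<in>Dv n. of_nat d)"
  proof (rule sum.reindex_bij_witness[where j="\<lambda>(m,k). Suc m" and i="\<lambda>d. (d - 1, n div d - 1)"])
    fix p assume "p \<in> fib n"
    then obtain m k where p: "p = (m,k)" "Suc m * Suc k = n" by (auto simp: fib_def)
    have le: "Suc m \<le> Suc m * Suc k" by simp
    have "n div Suc m = Suc k" using p(2) by (metis nonzero_mult_div_cancel_left nat.distinct(1))
    then show "(case p of (m,k) \<Rightarrow> Suc m) \<in> Dv n" "(case case p of (m,k) \<Rightarrow> Suc m of d \<Rightarrow> (d - 1, n div d - 1)) = p"
      "of_nat (case p of (m,k) \<Rightarrow> Suc m) = (case p of (m,k) \<Rightarrow> (of_nat (Suc m) :: complex))"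
      using p le dvd_triv_left[of "Suc m" "Suc k"] by (auto simp: Dv_def)
  next
    fix d assume d: "d \<in> Dv n"
    then have d1: "1 \<le> d" "d dvd n" by (auto simp: Dv_def)
    then obtain e where e: "n = d * e" by (auto elim: dvdE)
    obtain e' where e': "e = Suc e'" using e False by (cases e) auto
    obtain d' where d': "d = Suc d'" using d1 by (cases d) auto
    have "n div d = e" using e d1 by simp
    then show "(case (d - 1, n div d - 1) of (m,k) \<Rightarrow> Suc m) = d" "(d - 1, n div d - 1) \<in> fib n"
      using e by (simp_all add: fib_def d' e')
  qed
  finally show ?thesis by (simp add: sig_def)
qed

lemma lambert:
  fixes q :: complex
  assumes q: "norm q < 1"
  shows "(\<lambda>m. ln (1 - q^Suc m)) sums (- eval_fps Lfps q)"
proof -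
  define r where "r = norm q"
  have r0: "0 \<le> r" and r1: "r < 1" using q by (auto simp: r_def)
  define F where "F = (\<lambda>(m,k). q^(Suc m * Suc k) / of_nat (Suc k) :: complex)"
  define G where "G = (\<lambda>(m::nat,k::nat). r^m * r^k)"
  have normF: "norm (F (m,k)) \<le> r^k" "norm (F (m,k)) \<le> G (m,k)" for m k
  proof -
    have "norm (F (m,k)) = r^(Suc m * Suc k) / real (Suc k)"
      by (simp only: F_def case_prod_conv norm_divide norm_power norm_of_nat r_def)
    also have "\<dots> \<le> r^(Suc m * Suc k)" using divide_left_mono[of 1 "real (Suc k)" "r^(Suc m * Suc k)"] r0 by simp
    also have "\<dots> \<le> r^(m+k)" by (rule power_decreasing) (use r0 r1 in auto)
    finally have *: "norm (F (m,k)) \<le> r^(m+k)" .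
    then show "norm (F (m,k)) \<le> G (m,k)" by (simp add: G_def power_add)
    have "r^(m+k) \<le> r^k" by (rule power_decreasing) (use r0 r1 in auto)
    with * show "norm (F (m,k)) \<le> r^k" by linarith
  qed
  have Gsum: "G summable_on (Sigma UNIV (\<lambda>_. UNIV))"
  proof (rule summable_on_SigmaI)
    fix m :: nat
    have "(\<lambda>k. r^m * r^k) sums (r^m * (1 / (1 - r)))"
      by (rule sums_mult) (rule geometric_sums, use r0 r1 in auto)
    then show "((\<lambda>k. G (m, k)) has_sum (r^m / (1 - r))) UNIV"
      unfolding G_def by (intro sums_nonneg_imp_has_sum) (auto simp: r0)
  next
    have "(\<lambda>m. r^m * (1 / (1 - r))) sums ((1 / (1 - r)) * (1 / (1 - r)))"
      by (rule sums_mult2) (rule geometric_sums, use r0 r1 in auto)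
    then have "(\<lambda>m. r^m / (1 - r)) summable_on UNIV"
      using r0 r1 by (intro summable_nonneg_imp_summable_on) (auto simp: sums_iff)
    then show "(\<lambda>m. r^m / (1 - r)) summable_on UNIV" .
  qed (auto simp: G_def r0)
  have Fsum: "F summable_on UNIV"
  proof -
    have "(\<lambda>x. norm (F x)) summable_on UNIV"
    proof (rule Infinite_Sum.abs_summable_on_comparison_test'[OF Gsum[unfolded UNIV_Times_UNIV]])
      fix x :: "nat \<times> nat"
      show "norm (F x) \<le> G x" by (cases x) (simp only: normF)
    qed
    then show ?thesis by (rule abs_summable_summable)
  qed
  define T where "T = infsum F UNIV"
  have FT: "(F has_sum T) (Sigma UNIV (\<lambda>_. UNIV))"
    using Fsum unfolding T_def by (simp add: has_sum_infsum)
  have inner: "((\<lambda>k. F (m, k)) has_sum (- ln (1 - q^Suc m))) UNIV" for m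
  proof -
    have "norm (q^Suc m) = r^Suc m" by (simp only: norm_power r_def)
    also have "\<dots> \<le> r^1" by (rule power_decreasing) (use r0 r1 in auto)
    also have "\<dots> < 1" using r1 by simp
    finally have w: "norm (q^Suc m) < 1" .
    have "(\<lambda>n. - ((q^Suc m)^n) / of_nat n) sums ln (1 - q^Suc m)"
      using Ln_series'[of "- (q^Suc m)"] w by simp
    then have L1: "(\<lambda>k. - ((q^Suc m)^Suc k) / of_nat (Suc k)) sums ln (1 - q^Suc m)"
      using sums_Suc_iff[where f="\<lambda>n. - ((q^Suc m)^n) / of_nat n" and s="ln (1 - q^Suc m)"] by simp
    have "(\<lambda>k. - (- ((q^Suc m)^Suc k) / of_nat (Suc k))) sums (- ln (1 - q^Suc m))"
      by (rule sums_minus[OF L1])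
    moreover have "(\<lambda>k. - (- ((q^Suc m)^Suc k) / of_nat (Suc k))) = (\<lambda>k. F (m,k))"
      by (simp only: F_def case_prod_conv power_mult) simp
    ultimately have "(\<lambda>k. F (m,k)) sums (- ln (1 - q^Suc m))" by simp
    moreover have "summable (\<lambda>k. norm (F (m,k)))"
      by (rule summable_comparison_test'[OF summable_geometric[of r]]) (use r0 r1 normF in auto)
    ultimately show ?thesis by (intro norm_summable_imp_has_sum)
  qed
  have outer1: "((\<lambda>m. - ln (1 - q^Suc m)) has_sum T) UNIV"
    by (rule has_sum_Sigma'[OF FT]) (use inner in simp)
  have bij: "bij_betw snd (Sigma UNIV fib) UNIV"
    by (rule bij_betwI[where g="\<lambda>(m,k). (Suc m * Suc k, (m,k))"]) (auto simp: fib_def)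
  have FT2: "((\<lambda>x. F (snd x)) has_sum T) (Sigma UNIV fib)"
    using has_sum_reindex_bij_betw[OF bij, of F T] FT by simp
  have inner2: "((\<lambda>p. F (snd (n,p))) has_sum (fps_nth Lfps n * q^n)) (fib n)" for n
  proof -
    have "(\<Sum>p\<in>fib n. F p) = (\<Sum>(m,k)\<in>fib n. q^n * (1 / of_nat (Suc k)))"
      by (intro sum.cong refl) (auto simp: F_def fib_def)
    also have "\<dots> = q^n * (\<Sum>(m,k)\<in>fib n. 1 / of_nat (Suc k))"
      by (simp add: sum_distrib_left case_prod_unfold)
    also have "\<dots> = fps_nth Lfps n * q^n" by (simp only: fib_sum) (simp add: Lfps_def mult.commute)
    finally show ?thesis using fib_finite[of n] by (simp add: has_sum_finite_iff)
  qed
  have outer2: "((\<lambda>n. fps_nth Lfps n * q^n) has_sum T) UNIV"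
    by (rule has_sum_Sigma'[OF FT2]) (use inner2 in simp)
  have "T = eval_fps Lfps q"
  proof -
    have "(\<lambda>n. fps_nth Lfps n * q^n) sums T" by (rule has_sum_imp_sums[OF outer2])
    moreover have "(\<lambda>n. fps_nth Lfps n * q^n) sums eval_fps Lfps q"
    proof (rule sums_eval_fps)
      have "ereal (norm q) < 1" using q by simp
      then show "ereal (norm q) < fps_conv_radius Lfps" using rL by (rule less_le_trans)
    qed
    ultimately show ?thesis by (rule sums_unique2)
  qed
  moreover have "(\<lambda>m. - ln (1 - q^Suc m)) sums T" by (rule has_sum_imp_sums[OF outer1])
  ultimately show ?thesis using sums_minus by fastforce
qed

lemma rP: "fps_conv_radius Pfps \<ge> 1"
proof -
  have "fps_conv_radius (fps_const 24 * Afps) \<ge> 1"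
    using fps_conv_radius_mult[of "fps_const 24" Afps] rA by (simp add: min_def split: if_splits)
  then show ?thesis unfolding Pfps_def
    using fps_conv_radius_diff[of 1 "fps_const 24 * Afps"] by (simp add: min_def split: if_splits)
qed

lemma rQ: "fps_conv_radius Qfps \<ge> 1"
proof -
  have "fps_conv_radius (fps_const 240 * Bfps) \<ge> 1"
    using fps_conv_radius_mult[of "fps_const 240" Bfps] rB by (simp add: min_def split: if_splits)
  then show ?thesis unfolding Qfps_def
    using fps_conv_radius_add[of 1 "fps_const 240 * Bfps"] by (simp add: min_def split: if_splits)
qed

lemma rD: "fps_conv_radius (f :: complex fps) \<ge> 1 \<Longrightarrow> fps_conv_radius (fps_deriv f) \<ge> 1"
  by (erule order.trans) (rule fps_conv_radius_deriv)

lemma rlt: "norm (z::complex) < 1 \<Longrightarrow> fps_conv_radius f \<ge> 1 \<Longrightarrow> ereal (norm z) < fps_conv_radius f"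
  by (rule less_le_trans[of _ 1]) simp_all

lemma sig0: "sig 0 = 0" by (simp add: sig_def Dv_def)
lemma s30: "s3 0 = 0" by (simp add: s3_def Dv_def)

lemma XL: "fps_X * fps_deriv Lfps = Afps"
  by (rule fps_ext) (simp add: X_deriv_nth Lfps_def Afps_def sig0)

lemma eval_X_mult: "norm z < fps_conv_radius f \<Longrightarrow> eval_fps (fps_X * f) z = z * eval_fps f (z::complex)"
  by (subst eval_fps_mult) simp_all

lemma eval_const_mult: "norm z < fps_conv_radius f \<Longrightarrow> eval_fps (fps_const c * f) z = c * eval_fps f (z::complex)"
  by (subst eval_fps_mult) simp_all

lemma evA: "norm z < 1 \<Longrightarrow> z * eval_fps (fps_deriv Lfps) z = eval_fps Afps z"
  using eval_X_mult[of z "fps_deriv Lfps"] XL rlt[OF _ rD[OF rL]] by simp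

lemma evP: "norm z < 1 \<Longrightarrow> eval_fps Pfps z = 1 - 24 * eval_fps Afps z"
proof -
  assume z: "norm z < 1"
  have r1: "ereal (norm z) < fps_conv_radius (fps_const 24 * Afps)"
    using fps_conv_radius_cmult_left[of 24 Afps] rlt[OF z rA] by simp
  show ?thesis unfolding Pfps_def
    using eval_fps_diff[of z 1 "fps_const 24 * Afps"] r1 eval_const_mult[OF rlt[OF z rA]]
    by simp
qed

lemma evPd: "norm z < 1 \<Longrightarrow> 12 * (z * eval_fps (fps_deriv Pfps) z) = eval_fps Pfps z ^ 2 - eval_fps Qfps z"
proof -
  assume z: "norm z < 1"
  have "eval_fps (fps_const 12 * (fps_X * fps_deriv Pfps)) z = eval_fps (Pfps^2 - Qfps) z"
    by (simp only: fps_id)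
  moreover have "eval_fps (fps_const 12 * (fps_X * fps_deriv Pfps)) z = 12 * (z * eval_fps (fps_deriv Pfps) z)"
  proof -
    have rr: "ereal (norm z) < fps_conv_radius (fps_X * fps_deriv Pfps)"
      using fps_conv_radius_mult[of fps_X "fps_deriv Pfps"] rlt[OF z rD[OF rP]] by (simp add: min_def)
    show ?thesis using eval_const_mult[OF rr] eval_X_mult[OF rlt[OF z rD[OF rP]]] by simp
  qed
  moreover have "eval_fps (Pfps^2 - Qfps) z = eval_fps Pfps z ^ 2 - eval_fps Qfps z"
  proof -
    have rr: "ereal (norm z) < fps_conv_radius (Pfps * Pfps)"
      using fps_conv_radius_mult[of Pfps Pfps] rlt[OF z rP] by (simp add: min_def)
    show ?thesis unfolding power2_eq_square
      by (subst eval_fps_diff[OF rr rlt[OF z rQ]], subst eval_fps_mult[OF rlt[OF z rP] rlt[OF z rP]]) (rule refl)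
  qed
  ultimately show ?thesis by simp
qed

lemma evQ: "norm z < 1 \<Longrightarrow> eval_fps Qfps z = 1 + 240 * (\<Sum>m. of_nat (sigma3 (Suc m)) * z ^ Suc m)"
proof -
  assume z: "norm z < 1"
  have r1: "ereal (norm z) < fps_conv_radius (fps_const 240 * Bfps)"
    using fps_conv_radius_cmult_left[of 240 Bfps] rlt[OF z rB] by simp
  have "eval_fps Qfps z = 1 + 240 * eval_fps Bfps z"
    unfolding Qfps_def using eval_fps_add[of z 1 "fps_const 240 * Bfps"] r1 eval_const_mult[OF rlt[OF z rB]]
    by simp
  moreover have "eval_fps Bfps z = (\<Sum>m. of_nat (sigma3 (Suc m)) * z ^ Suc m)"
  proof -
    have "(\<lambda>n. fps_nth Bfps n * z^n) sums eval_fps Bfps z" by (rule sums_eval_fps[OF rlt[OF z rB]])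
    then have "(\<lambda>m. fps_nth Bfps (Suc m) * z^Suc m) sums eval_fps Bfps z"
      using sums_Suc_iff[where f="\<lambda>n. fps_nth Bfps n * z^n"] by (simp add: Bfps_def s30)
    then show ?thesis by (simp add: Bfps_def sigma3_eq sums_iff)
  qed
  ultimately show ?thesis by simp
qed

lemma norm_qnome: "norm (qnome t) = exp (- 2 * pi * Im t)"
  by (simp add: qnome_def)

lemma qnome_lt1: "Im t > 0 \<Longrightarrow> norm (qnome t) < 1"
  by (simp add: norm_qnome)

lemma E4_eq: "Im t > 0 \<Longrightarrow> eisenstein_E4 t = eval_fps Qfps (qnome t)"
  by (simp add: eisenstein_E4_def evQ qnome_lt1)

lemma eta_eq:
  assumes "Im t > 0"
  shows "dedekind_eta t = exp (2 * complex_of_real pi * \<i> * t / 24 - eval_fps Lfps (qnome t))"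
proof -
  define q where "q = qnome t"
  have q: "norm q < 1" using qnome_lt1[OF assms] by (simp add: q_def)
  have nz: "1 - q^Suc m \<noteq> 0" for m
  proof
    assume "1 - q^Suc m = 0"
    then have "norm (q^Suc m) = 1" by (metis norm_one right_minus_eq)
    moreover have "norm (q^Suc m) < 1"
    proof -
      have "norm (q^Suc m) = norm q ^ Suc m" by (simp only: norm_power)
      also have "\<dots> \<le> norm q ^ 1" by (rule power_decreasing) (use q in auto)
      also have "\<dots> < 1" using q by simp
      finally show ?thesis .
    qed
    ultimately show False by simp
  qed
  have "(\<lambda>N. \<Sum>m<N. ln (1 - q^Suc m)) \<longlonglongrightarrow> - eval_fps Lfps q"
    using lambert[OF q] by (simp add: sums_def)
  then have "(\<lambda>N. exp (\<Sum>m<N. ln (1 - q^Suc m))) \<longlonglongrightarrow> exp (- eval_fps Lfps q)"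
    by (rule tendsto_exp)
  moreover have "exp (\<Sum>m<N. ln (1 - q^Suc m)) = (\<Prod>m<N. 1 - q^Suc m)" for N
    by (simp only: exp_sum[OF finite_lessThan] exp_Ln[OF nz])
  ultimately have "(\<lambda>N. \<Prod>m<N. 1 - q^Suc m) \<longlonglongrightarrow> exp (- eval_fps Lfps q)" by simp
  then have "(\<lambda>N. \<Prod>m<Suc N. 1 - q^Suc m) \<longlonglongrightarrow> exp (- eval_fps Lfps q)"
    by (rule LIMSEQ_Suc)
  then have "raw_has_prod (\<lambda>m. 1 - q^Suc m) 0 (exp (- eval_fps Lfps q))"
    unfolding raw_has_prod_def by (simp add: lessThan_Suc_atMost)
  then have "(\<lambda>m. 1 - q^Suc m) has_prod exp (- eval_fps Lfps q)"
    by (simp add: has_prod_def)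
  then have P: "(\<Prod>m. 1 - q^Suc m) = exp (- eval_fps Lfps q)"
    by (rule has_prod_unique[symmetric])
  have e: "exp (2 * complex_of_real pi * \<i> * t / 24 - eval_fps Lfps q) = exp (2 * complex_of_real pi * \<i> * t / 24) * exp (- eval_fps Lfps q)"
    by (simp only: diff_conv_add_uminus exp_add)
  show ?thesis unfolding dedekind_eta_def q_def[symmetric] e P by (rule refl)
qed

definition ell :: "complex \<Rightarrow> complex" where
  "ell t = complex_of_real pi * \<i> * t / 3 - 4 * eval_fps Lfps (qnome t)"
definition gg :: "complex \<Rightarrow> complex" where "gg t = exp (ell t)"
definition hh :: "complex \<Rightarrow> complex" where
  "hh t = complex_of_real pi * \<i> / 3 * eval_fps Pfps (qnome t)"
definition hh' :: "complex \<Rightarrow> complex" where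
  "hh' t = complex_of_real pi * \<i> / 3 * ((2 * complex_of_real pi * \<i>) * ((eval_fps Pfps (qnome t))^2 - eval_fps Qfps (qnome t)) / 12)"

lemma eta4: "Im t > 0 \<Longrightarrow> dedekind_eta t ^ 4 = gg t"
proof -
  assume t: "Im t > 0"
  have "dedekind_eta t ^ 4 = exp (of_nat 4 * (2 * complex_of_real pi * \<i> * t / 24 - eval_fps Lfps (qnome t)))"
    by (simp only: eta_eq[OF t] exp_of_nat_mult)
  also have "of_nat 4 * (2 * complex_of_real pi * \<i> * t / 24 - eval_fps Lfps (qnome t)) = ell t"
    by (simp add: ell_def algebra_simps)
  finally show ?thesis by (simp add: gg_def)
qed

lemma dq: "(qnome has_field_derivative (2 * complex_of_real pi * \<i> * qnome t)) (at t)"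
proof -
  have "((\<lambda>t. exp (2 * complex_of_real pi * \<i> * t)) has_field_derivative exp (2 * complex_of_real pi * \<i> * t) * (2 * complex_of_real pi * \<i>)) (at t)"
    by (rule DERIV_chain2[OF DERIV_exp]) (auto intro!: derivative_eq_intros)
  then show ?thesis unfolding qnome_def[abs_def] by (simp add: mult.commute)
qed

lemma devq:
  assumes "Im t > 0" "fps_conv_radius f \<ge> 1"
  shows "((\<lambda>s. eval_fps f (qnome s)) has_field_derivative (eval_fps (fps_deriv f) (qnome t) * (2 * complex_of_real pi * \<i> * qnome t))) (at t)"
  by (rule DERIV_chain2[OF has_field_derivative_eval_fps dq]) (rule rlt[OF qnome_lt1[OF assms(1)] assms(2)])

lemma dell: "Im t > 0 \<Longrightarrow> (ell has_field_derivative hh t) (at t)"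
proof -
  assume t: "Im t > 0"
  define q where "q = qnome t"
  have q: "norm q < 1" using qnome_lt1[OF t] by (simp add: q_def)
  have "(ell has_field_derivative (complex_of_real pi * \<i> / 3 - 4 * (eval_fps (fps_deriv Lfps) q * (2 * complex_of_real pi * \<i> * q)))) (at t)"
    unfolding ell_def[abs_def] q_def
    by (intro DERIV_diff DERIV_cmult devq[OF t rL]) (auto intro!: derivative_eq_intros)
  moreover have "complex_of_real pi * \<i> / 3 - 4 * (eval_fps (fps_deriv Lfps) q * (2 * complex_of_real pi * \<i> * q)) = hh t"
  proof -
    have "4 * (eval_fps (fps_deriv Lfps) q * (2 * complex_of_real pi * \<i> * q)) = 8 * complex_of_real pi * \<i> * (q * eval_fps (fps_deriv Lfps) q)"
      by (simp add: algebra_simps)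
    also have "\<dots> = 8 * complex_of_real pi * \<i> * eval_fps Afps q" by (simp only: evA[OF q])
    finally show ?thesis unfolding hh_def q_def[symmetric] evP[OF q] by (simp add: algebra_simps)
  qed
  ultimately show ?thesis by simp
qed

lemma dgg: "Im t > 0 \<Longrightarrow> (gg has_field_derivative hh t * gg t) (at t)"
proof -
  assume t: "Im t > 0"
  have "((\<lambda>s. exp (ell s)) has_field_derivative exp (ell t) * hh t) (at t)"
    by (rule DERIV_chain2[OF DERIV_exp dell[OF t]])
  then show ?thesis unfolding gg_def[abs_def] by (simp add: mult.commute)
qed

lemma dhh: "Im t > 0 \<Longrightarrow> (hh has_field_derivative hh' t) (at t)"
proof -
  assume t: "Im t > 0"
  define q where "q = qnome t"
  have q: "norm q < 1" using qnome_lt1[OF t] by (simp add: q_def)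
  have "(hh has_field_derivative (complex_of_real pi * \<i> / 3 * (eval_fps (fps_deriv Pfps) q * (2 * complex_of_real pi * \<i> * q)))) (at t)"
    unfolding hh_def[abs_def] q_def by (intro DERIV_cmult devq[OF t rP])
  moreover have "complex_of_real pi * \<i> / 3 * (eval_fps (fps_deriv Pfps) q * (2 * complex_of_real pi * \<i> * q)) = hh' t"
  proof -
    have "eval_fps (fps_deriv Pfps) q * (2 * complex_of_real pi * \<i> * q) = (2 * complex_of_real pi * \<i>) * (12 * (q * eval_fps (fps_deriv Pfps) q)) / 12"
      by (simp add: algebra_simps)
    also have "\<dots> = (2 * complex_of_real pi * \<i>) * (eval_fps Pfps q ^ 2 - eval_fps Qfps q) / 12"
      by (simp only: evPd[OF q])
    finally have X: "eval_fps (fps_deriv Pfps) q * (2 * complex_of_real pi * \<i> * q) = (2 * complex_of_real pi * \<i>) * (eval_fps Pfps q ^ 2 - eval_fps Qfps q) / 12" .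
    show ?thesis unfolding hh'_def q_def[symmetric] by (simp only: X)
  qed
  ultimately show ?thesis by simp
qed

definition HH :: "complex set" where "HH = {t. Im t > 0}"

lemma HH_open: "open HH" unfolding HH_def by (rule open_halfspace_Im_gt)
lemma HH_convex: "convex HH" unfolding HH_def by (rule convex_halfspace_Im_gt)
lemma i_HH: "\<i> \<in> HH" by (simp add: HH_def)

lemma gg_holo: "gg holomorphic_on HH"
  using HH_open
proof (rule holomorphic_on_open[THEN iffD2], intro ballI)
  fix x assume "x \<in> HH"
  then show "\<exists>f'. (gg has_field_derivative f') (at x)" using dgg by (auto simp: HH_def)
qed

lemma f6_deriv:
  assumes t: "t \<in> HH"
  shows "(f6 has_field_derivative gg t) (at t)"
proof -
  have cont: "continuous_on HH gg" by (rule holomorphic_on_imp_continuous_on[OF gg_holo])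
  have "((\<lambda>x. contour_integral (linepath \<i> x) gg) has_field_derivative gg t) (at t within HH)"
  proof (rule triangle_contour_integrals_convex_primitive[OF cont i_HH HH_convex t])
    fix b c assume bc: "b \<in> HH" "c \<in> HH"
    have "convex hull {\<i>, b, c} \<subseteq> HH"
      by (rule hull_minimal) (use bc i_HH HH_convex in auto)
    then have "gg holomorphic_on convex hull {\<i>, b, c}" by (rule holomorphic_on_subset[OF gg_holo])
    then show "contour_integral (linepath \<i> b) gg + contour_integral (linepath b c) gg + contour_integral (linepath c \<i>) gg = 0"
      by (rule has_chain_integral_chain_integral3[OF Cauchy_theorem_triangle])
  qed
  then have D: "((\<lambda>x. contour_integral (linepath \<i> x) gg) has_field_derivative gg t) (at t)"
    using at_within_open[OF t HH_open] by simp
  show ?thesis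
  proof (rule has_field_derivative_transform_within_open[OF D HH_open t])
    fix x assume x: "x \<in> HH"
    have seg: "closed_segment \<i> x \<subseteq> HH" by (rule convex_contains_segment[THEN iffD1, OF HH_convex, rule_format]) (use x i_HH in auto)
    show "contour_integral (linepath \<i> x) gg = f6 x"
      unfolding f6_def
    proof (rule contour_integral_eq)
      fix z assume "z \<in> path_image (linepath \<i> x)"
      then have "z \<in> HH" using seg by auto
      then show "gg z = dedekind_eta z ^ 4" using eta4 by (simp add: HH_def)
    qed
  qed
qed

lemma deriv3: "(deriv ^^ 3) f = deriv (deriv (deriv f))"
  by (simp add: numeral_3_eq_3)
lemma deriv2: "(deriv ^^ 2) f = deriv (deriv f)"
  by (simp add: numeral_2_eq_2)

theorem proposition5p1:
  fixes \<tau> :: complex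
  assumes "Im \<tau> > 0"
  shows "schwarzian f6 \<tau> = 2 * complex_of_real pi ^ 2 / 36 * eisenstein_E4 \<tau>"
proof -
  have t: "\<tau> \<in> HH" using assms by (simp add: HH_def)
  have d1: "deriv f6 x = gg x" if "x \<in> HH" for x
    by (rule DERIV_imp_deriv[OF f6_deriv[OF that]])
  have d2: "deriv (deriv f6) x = hh x * gg x" if x: "x \<in> HH" for x
  proof -
    have "deriv (deriv f6) x = deriv gg x"
      by (rule deriv_cong_ev[OF _ refl]) (use eventually_nhds_in_open[OF HH_open x] d1 in \<open>auto elim: eventually_mono\<close>)
    also have "\<dots> = hh x * gg x" using x dgg by (intro DERIV_imp_deriv) (auto simp: HH_def)
    finally show ?thesis .
  qed
  have d3: "deriv (deriv (deriv f6)) \<tau> = hh' \<tau> * gg \<tau> + hh \<tau> * gg \<tau> * hh \<tau>"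
  proof -
    have "deriv (deriv (deriv f6)) \<tau> = deriv (\<lambda>x. hh x * gg x) \<tau>"
      by (rule deriv_cong_ev[OF _ refl]) (use eventually_nhds_in_open[OF HH_open t] d2 in \<open>auto elim: eventually_mono\<close>)
    also have "\<dots> = hh' \<tau> * gg \<tau> + hh \<tau> * gg \<tau> * hh \<tau>"
      by (intro DERIV_imp_deriv DERIV_mult dhh dgg) (use assms in auto)
    finally show ?thesis .
  qed
  have gnz: "gg \<tau> \<noteq> 0" by (simp add: gg_def)
  have "schwarzian f6 \<tau> = (hh' \<tau> * gg \<tau> + hh \<tau> * gg \<tau> * hh \<tau>) / gg \<tau> - 3 / 2 * (hh \<tau> * gg \<tau> / gg \<tau>)^2"
    unfolding schwarzian_def deriv3 deriv2 d3 d1[OF t] d2[OF t] by (rule refl)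
  also have "\<dots> = hh' \<tau> + hh \<tau> ^ 2 - 3 / 2 * hh \<tau> ^ 2"
    using gnz by (simp add: field_simps power2_eq_square)
  also have "\<dots> = 2 * complex_of_real pi ^ 2 / 36 * eisenstein_E4 \<tau>"
    unfolding hh'_def hh_def E4_eq[OF assms] by (simp add: field_simps power2_eq_square)
  finally show ?thesis .
qed

end
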